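(* For every $n\ge2$, $\operatorname{diam}(\mathcal{C}_3(K_{1,n-1}))=\lfloor 3n/2\rfloor$.
   Context: $K_{1,n-1}$ is the star with one center and $n-1$ leaves. A proper 3-coloring of a tree $T=(V,E)$ is a map $f\colon V\to\mathbb{Z}/3\mathbb{Z}$ with $f(u)\neq f(v)$ for every edge $uv\in E$. The 3-coloring graph $\mathcal{C}_3(T)$ has the proper 3-colorings as vertices, two colorings adjacent iff they differ at exactly one vertex; $\operatorname{diam}$ denotes graph diameter. *)

theory Defs
  imports "HOL-Library.Extended_Nat"
begin

text \<open>Graphs are given by a vertex set V and a symmetric edge relation E.
  Colours are the k elements 0..k-1 (for k = 3 this is Z/3Z as a set).
  Colourings are extensional: value 0 outside V.\<close>

definition proper_coloring :: "nat \<Rightarrow> 'a set \<Rightarrow> ('a \<Rightarrow> 'a \<Rightarrow> bool) \<Rightarrow> ('a \<Rightarrow> nat) \<Rightarrow> bool" where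
  "proper_coloring k V E f \<longleftrightarrow>
     (\<forall>v\<in>V. f v < k) \<and> (\<forall>v. v \<notin> V \<longrightarrow> f v = 0) \<and>
     (\<forall>u\<in>V. \<forall>v\<in>V. E u v \<longrightarrow> f u \<noteq> f v)"

definition colorings :: "nat \<Rightarrow> 'a set \<Rightarrow> ('a \<Rightarrow> 'a \<Rightarrow> bool) \<Rightarrow> ('a \<Rightarrow> nat) set" where
  "colorings k V E = {f. proper_coloring k V E f}"

definition col_adj :: "'a set \<Rightarrow> ('a \<Rightarrow> nat) \<Rightarrow> ('a \<Rightarrow> nat) \<Rightarrow> bool" where
  "col_adj V f g \<longleftrightarrow> card {v\<in>V. f v \<noteq> g v} = 1"

definition col_walk :: "nat \<Rightarrow> 'a set \<Rightarrow> ('a \<Rightarrow> 'a \<Rightarrow> bool) \<Rightarrow> ('a \<Rightarrow> nat) list \<Rightarrow> bool" where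
  "col_walk k V E xs \<longleftrightarrow> xs \<noteq> [] \<and> set xs \<subseteq> colorings k V E \<and>
     (\<forall>i. Suc i < length xs \<longrightarrow> col_adj V (xs ! i) (xs ! Suc i))"

text \<open>Graph distance in the coloring graph (infinity if not connected).\<close>
definition col_dist :: "nat \<Rightarrow> 'a set \<Rightarrow> ('a \<Rightarrow> 'a \<Rightarrow> bool) \<Rightarrow> ('a \<Rightarrow> nat) \<Rightarrow> ('a \<Rightarrow> nat) \<Rightarrow> enat" where
  "col_dist k V E f g =
     (INF xs \<in> {xs. col_walk k V E xs \<and> hd xs = f \<and> last xs = g}. enat (length xs - 1))"

definition col_diam :: "nat \<Rightarrow> 'a set \<Rightarrow> ('a \<Rightarrow> 'a \<Rightarrow> bool) \<Rightarrow> enat" where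
  "col_diam k V E = (SUP f \<in> colorings k V E. SUP g \<in> colorings k V E. col_dist k V E f g)"

text \<open>The star K_{1,n-1}: vertices 0..n-1, centre 0, leaves 1..n-1.\<close>
definition star_V :: "nat \<Rightarrow> nat set" where
  "star_V n = {0..<n}"

definition star_E :: "nat \<Rightarrow> nat \<Rightarrow> bool" where
  "star_E u v \<longleftrightarrow> (u = 0 \<and> v \<noteq> 0) \<or> (v = 0 \<and> u \<noteq> 0)"

end

theory Submission
  imports Defs
begin

definition DD :: "nat \<Rightarrow> (nat\<Rightarrow>nat) \<Rightarrow> (nat\<Rightarrow>nat) \<Rightarrow> nat" where
"DD n f h = (if f 0 = h 0 then card {v\<in>{1..<n}. f v \<noteq> h v}
   else min (card {v\<in>{1..<n}. f v = h 0} + card {v\<in>{1..<n}. h v = f 0} + 1)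
            (3*(n-1)+2 - card {v\<in>{1..<n}. f v = h 0} - card {v\<in>{1..<n}. h v = f 0}))"

lemma DD_eq: "f 0 = h 0 \<Longrightarrow> DD n f h = card {v\<in>{1..<n}. f v \<noteq> h v}"
  unfolding DD_def by simp

lemma DD_neq: "f 0 \<noteq> h 0 \<Longrightarrow> DD n f h = min (card {v\<in>{1..<n}. f v = h 0} + card {v\<in>{1..<n}. h v = f 0} + 1)
            (3*(n-1)+2 - card {v\<in>{1..<n}. f v = h 0} - card {v\<in>{1..<n}. h v = f 0})"
  unfolding DD_def by simp

lemma card_ins1: "finite B \<Longrightarrow> A \<subseteq> insert w B \<Longrightarrow> card A \<le> card B + 1"
proof -
  assume a: "finite B" "A \<subseteq> insert w B"
  have "card A \<le> card (insert w B)" using a by (intro card_mono) auto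
  also have "\<dots> \<le> card B + 1" using a(1) by (simp add: card_insert_if)
  finally show ?thesis .
qed

lemma cardL: "A \<subseteq> {1..<n} \<Longrightarrow> card A \<le> n - 1"
proof -
  assume "A \<subseteq> {1..<n}"
  then have "card A \<le> card {1..<n}" by (intro card_mono) auto
  then show ?thesis by simp
qed

lemma third3: "(x::nat) < 3 \<Longrightarrow> a < 3 \<Longrightarrow> b < 3 \<Longrightarrow> x \<noteq> a \<Longrightarrow> x \<noteq> b \<Longrightarrow> a \<noteq> b \<Longrightarrow> x = 3 - a - b"
  by presburger

lemma third3': "a < 3 \<Longrightarrow> b < 3 \<Longrightarrow> a \<noteq> b \<Longrightarrow> 3 - a - b < (3::nat) \<and> 3 - a - b \<noteq> a \<and> 3 - a - b \<noteq> b"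
  by presburger

lemma sub_ins: assumes "\<And>v. v \<noteq> w \<Longrightarrow> h v = h' v"
  shows "{v\<in>A. P v (h' v)} \<subseteq> insert w {v\<in>A. P v (h v)}"
proof (rule subsetI)
  fix x assume x: "x \<in> {v\<in>A. P v (h' v)}"
  show "x \<in> insert w {v\<in>A. P v (h v)}"
  proof (cases "x = w")
    case False then show ?thesis using x assms[OF False] by simp
  qed simp
qed

lemma arB: "(Q::nat) < Q' \<Longrightarrow> Q' \<le> m \<Longrightarrow> P \<le> m \<Longrightarrow> D' \<le> 3*m+2-P-Q' \<Longrightarrow>
   \<not> (P+Q+1 \<le> 3*m+2-P-Q) \<Longrightarrow> D' < min (P+Q+1) (3*m+2-P-Q)"
  by linarith

lemma arC1: "(P::nat)+Q+1 \<le> X \<Longrightarrow> X+P+Q = 3*m+2 \<Longrightarrow> 2*(P+Q+1) \<le> 3*(m+1)" by presburger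
lemma arC2: "\<not> (P::nat)+Q+1 \<le> X \<Longrightarrow> X+P+Q = 3*m+2 \<Longrightarrow> 2*X \<le> 3*(m+1)" by presburger

lemma arC: assumes "(P::nat) \<le> m" "Q \<le> m" shows "2 * min (P+Q+1) (3*m+2-P-Q) \<le> 3*(m+1)"
proof -
  have s: "3*m+2-P-Q + P + Q = 3*m+2" using assms by simp
  show ?thesis
  proof (cases "P+Q+1 \<le> 3*m+2-P-Q")
    case True
    then have e: "min (P+Q+1) (3*m+2-P-Q) = P+Q+1" by (rule min_absorb1)
    show ?thesis unfolding e by (rule arC1[OF True s])
  next
    case False
    then have e: "min (P+Q+1) (3*m+2-P-Q) = 3*m+2-P-Q" by simp
    show ?thesis unfolding e by (rule arC2[OF False s])
  qed
qed

lemma arA1: "(P::nat) \<le> m \<Longrightarrow> Q \<le> m \<Longrightarrow> Q' \<le> m \<Longrightarrow> Q' \<le> Q + 1 \<Longrightarrow> Q \<le> Q' + 1 \<Longrightarrow>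
  min (P+Q'+1) (3*m+2-P-Q') \<le> min (P+Q+1) (3*m+2-P-Q) + 1"
  by linarith 
lemma arA2: "(P::nat) \<le> m \<Longrightarrow> P' \<le> S \<Longrightarrow> min (P'+0+1) (3*m+2-P'-0) \<le> S + 1"
  by linarith
lemma arA3: "(P::nat) \<le> m \<Longrightarrow> S \<le> P \<Longrightarrow> S \<le> min (P+0+1) (3*m+2-P-0) + 1"
  by linarith
lemma arA4: "(P::nat) + P' = m \<Longrightarrow> min (P'+m+1) (3*m+2-P'-m) \<le> min (P+m+1) (3*m+2-P-m) + 1"
  by linarith

context fixes n :: nat assumes n2: "2 \<le> n" begin

lemma col_iff: "h \<in> colorings 3 (star_V n) star_E \<longleftrightarrow>
  h 0 < 3 \<and> (\<forall>v\<in>{1..<n}. h v < 3 \<and> h v \<noteq> h 0) \<and> (\<forall>v. n \<le> v \<longrightarrow> h v = 0)"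
proof
  assume h: "h \<in> colorings 3 (star_V n) star_E"
  then have a: "\<forall>v<n. h v < 3" "\<forall>v. \<not> v < n \<longrightarrow> h v = 0"
     "\<forall>u<n. \<forall>v<n. star_E u v \<longrightarrow> h u \<noteq> h v"
    unfolding colorings_def proper_coloring_def star_V_def by auto
  have "\<forall>v\<in>{1..<n}. h v \<noteq> h 0"
  proof
    fix v assume "v \<in> {1..<n}"
    then have "v < n" "v \<noteq> 0" "0 < n" "star_E v 0" using n2 by (auto simp: star_E_def)
    then show "h v \<noteq> h 0" using a(3) by blast
  qed
  then show "h 0 < 3 \<and> (\<forall>v\<in>{1..<n}. h v < 3 \<and> h v \<noteq> h 0) \<and> (\<forall>v. n \<le> v \<longrightarrow> h v = 0)"
    using a n2 by auto
next
  assume a: "h 0 < 3 \<and> (\<forall>v\<in>{1..<n}. h v < 3 \<and> h v \<noteq> h 0) \<and> (\<forall>v. n \<le> v \<longrightarrow> h v = 0)"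
  have 1: "\<forall>v<n. h v < 3"
  proof (intro allI impI)
    fix v assume "v < n" then show "h v < 3" using a by (cases "v = 0") auto
  qed
  have 2: "\<forall>u<n. \<forall>v<n. star_E u v \<longrightarrow> h u \<noteq> h v"
    using a unfolding star_E_def by (metis atLeastLessThan_iff less_one not_less)
  show "h \<in> colorings 3 (star_V n) star_E"
    unfolding colorings_def proper_coloring_def star_V_def using 1 2 a by auto
qed

lemma adj_obtain:
  assumes "h \<in> colorings 3 (star_V n) star_E" "h' \<in> colorings 3 (star_V n) star_E"
    "col_adj (star_V n) h h'"
  obtains w where "w < n" "h w \<noteq> h' w" "\<And>v. v \<noteq> w \<Longrightarrow> h v = h' v"
proof -
  obtain w where w: "{v\<in>star_V n. h v \<noteq> h' v} = {w}"
    using assms(3) unfolding col_adj_def by (auto simp: card_1_singleton_iff)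
  have "\<And>v. v \<noteq> w \<Longrightarrow> h v = h' v"
  proof -
    fix v assume "v \<noteq> w"
    show "h v = h' v"
    proof (cases "v < n")
      case True then show ?thesis using w \<open>v \<noteq> w\<close> unfolding star_V_def by auto
    next
      case False then show ?thesis using assms(1,2) by (simp add: col_iff)
    qed
  qed
  moreover have "w < n" "h w \<noteq> h' w" using w unfolding star_V_def by auto
  ultimately show ?thesis using that by blast
qed


lemma cards_le: "card {v\<in>{1..<n}. P v} \<le> n - 1"
  by (rule cardL) auto

lemma lip:
  assumes f: "f \<in> colorings 3 (star_V n) star_E"
    and h: "h \<in> colorings 3 (star_V n) star_E" and h': "h' \<in> colorings 3 (star_V n) star_E"
    and adj: "col_adj (star_V n) h h'"
  shows "DD n f h' \<le> DD n f h + 1"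
proof -
  obtain w where w: "w < n" "h w \<noteq> h' w" "\<And>v. v \<noteq> w \<Longrightarrow> h v = h' v"
    using adj_obtain[OF h h' adj] by blast
  have fc: "f 0 < 3" "\<forall>v\<in>{1..<n}. f v < 3 \<and> f v \<noteq> f 0" using f col_iff by auto
  have hc: "h 0 < 3" "\<forall>v\<in>{1..<n}. h v < 3 \<and> h v \<noteq> h 0" using h col_iff by auto
  have h'c: "h' 0 < 3" "\<forall>v\<in>{1..<n}. h' v < 3 \<and> h' v \<noteq> h' 0" using h' col_iff by auto
  have fin: "finite {v\<in>{1..<n}. P v}" for P by auto
  show ?thesis
  proof (cases "w = 0")
    case False
    then have c: "h' 0 = h 0" using w(3)[of 0] by simp
    have w3: "\<And>v. v \<noteq> w \<Longrightarrow> h' v = h v" using w(3) by simp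
    have S: "card {v\<in>{1..<n}. f v \<noteq> h' v} \<le> card {v\<in>{1..<n}. f v \<noteq> h v} + 1"
      by (rule card_ins1[OF fin sub_ins[where P="\<lambda>v y. f v \<noteq> y", OF w(3)]])
    have Q1: "card {v\<in>{1..<n}. h' v = f 0} \<le> card {v\<in>{1..<n}. h v = f 0} + 1"
      by (rule card_ins1[OF fin sub_ins[where P="\<lambda>v y. y = f 0", OF w(3)]])
    have Q2: "card {v\<in>{1..<n}. h v = f 0} \<le> card {v\<in>{1..<n}. h' v = f 0} + 1"
      by (rule card_ins1[OF fin sub_ins[where P="\<lambda>v y. y = f 0", OF w3]])
    have b1: "card {v\<in>{1..<n}. f v = h 0} \<le> n - 1" "card {v\<in>{1..<n}. h' v = f 0} \<le> n - 1"
       "card {v\<in>{1..<n}. h v = f 0} \<le> n - 1" by (rule cards_le)+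
    show ?thesis
    proof (cases "f 0 = h 0")
      case True
      then show ?thesis using S DD_eq[of f h n] DD_eq[of f h' n] c by simp
    next
      case False
      then show ?thesis using DD_neq[of f h n] DD_neq[of f h' n] c
        arA1[OF b1(1) b1(3) b1(2) Q1 Q2] by simp
    qed
  next
    case True
    define b where "b = h 0"
    define b' where "b' = h' 0"
    define t where "t = 3 - b - b'"
    have bb: "b \<noteq> b'" "b < 3" "b' < 3" using w(2) True hc(1) h'c(1) b_def b'_def by auto
    have tt: "t < 3" "t \<noteq> b" "t \<noteq> b'" using third3'[OF bb(2,3,1)] t_def by auto
    have thr: "\<And>x. x < 3 \<Longrightarrow> x \<noteq> b \<Longrightarrow> x \<noteq> b' \<Longrightarrow> x = t" using third3 bb t_def by blast
    have lv: "\<forall>v\<in>{1..<n}. h' v = h v \<and> h v = t"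
    proof
      fix v assume v: "v \<in> {1..<n}"
      then have "v \<noteq> w" using True by auto
      then have e: "h' v = h v" using w(3)[of v] by simp
      have "h v < 3" "h v \<noteq> b" using hc v b_def by auto
      moreover have "h v \<noteq> b'" using h'c v e b'_def by auto
      ultimately show "h' v = h v \<and> h v = t" using e thr by blast
    qed
    have lh: "\<And>v. v \<in> {1..<n} \<Longrightarrow> h v = t" and lh': "\<And>v. v \<in> {1..<n} \<Longrightarrow> h' v = t"
      using lv by auto
    have b1: "card {v\<in>{1..<n}. f v = b} \<le> n - 1" "card {v\<in>{1..<n}. f v = b'} \<le> n - 1"
      by (rule cards_le)+
    consider "f 0 = b" | "f 0 = b'" | "f 0 \<noteq> b" "f 0 \<noteq> b'" by blast
    then show ?thesis
    proof cases
      case 1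
      have e1: "{v\<in>{1..<n}. h' v = f 0} = {}" using lh' 1 tt by auto
      have "card {v\<in>{1..<n}. f v = b'} \<le> card {v\<in>{1..<n}. f v \<noteq> h v}"
        by (rule card_mono[OF fin]) (use lh tt in auto)
      moreover have "DD n f h = card {v\<in>{1..<n}. f v \<noteq> h v}" using DD_eq[of f h n] 1 b_def by simp
      moreover have "DD n f h' = min (card {v\<in>{1..<n}. f v = b'} + 0 + 1) (3*(n-1)+2 - card {v\<in>{1..<n}. f v = b'} - 0)"
        using DD_neq[of f h' n] 1 bb b'_def unfolding e1 by simp
      ultimately show ?thesis using arA2[OF b1(2)] by simp
    next
      case 2
      have e1: "{v\<in>{1..<n}. h v = f 0} = {}" using lh 2 tt by auto
      have "card {v\<in>{1..<n}. f v \<noteq> h' v} \<le> card {v\<in>{1..<n}. f v = b}"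
      proof (rule card_mono[OF fin], rule subsetI)
        fix x assume x: "x \<in> {v\<in>{1..<n}. f v \<noteq> h' v}"
        then have "x \<in> {1..<n}" "f x \<noteq> t" using lh' by auto
        moreover have "f x < 3" "f x \<noteq> b'" using fc 2 \<open>x \<in> {1..<n}\<close> by auto
        ultimately show "x \<in> {v\<in>{1..<n}. f v = b}" using thr by blast
      qed
      moreover have "DD n f h' = card {v\<in>{1..<n}. f v \<noteq> h' v}" using DD_eq[of f h' n] 2 b'_def by simp
      moreover have "DD n f h = min (card {v\<in>{1..<n}. f v = b} + 0 + 1) (3*(n-1)+2 - card {v\<in>{1..<n}. f v = b} - 0)"
        using DD_neq[of f h n] 2 bb b_def unfolding e1 by simp
      ultimately show ?thesis using arA3[OF b1(1)] by simp
    next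
      case 3
      have ft: "f 0 = t" using 3 fc thr by blast
      have e1: "{v\<in>{1..<n}. h v = f 0} = {1..<n}" using lh ft by auto
      have e2: "{v\<in>{1..<n}. h' v = f 0} = {1..<n}" using lh' ft by auto
      have un: "{1..<n} = {v\<in>{1..<n}. f v = b} \<union> {v\<in>{1..<n}. f v = b'}"
      proof
        show "{1..<n} \<subseteq> {v\<in>{1..<n}. f v = b} \<union> {v\<in>{1..<n}. f v = b'}"
        proof
          fix x assume x: "x \<in> {1..<n}"
          then have "f x < 3" "f x \<noteq> t" using fc ft by auto
          then show "x \<in> {v\<in>{1..<n}. f v = b} \<union> {v\<in>{1..<n}. f v = b'}" using thr x by blast
        qed
      qed auto
      have "card {1..<n} = card {v\<in>{1..<n}. f v = b} + card {v\<in>{1..<n}. f v = b'}"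
        by (subst un, rule card_Un_disjoint) (use bb in auto)
      then have sum: "card {v\<in>{1..<n}. f v = b} + card {v\<in>{1..<n}. f v = b'} = n - 1" by simp
      have "DD n f h = min (card {v\<in>{1..<n}. f v = b} + (n-1) + 1) (3*(n-1)+2 - card {v\<in>{1..<n}. f v = b} - (n-1))"
        using DD_neq[of f h n] 3 b_def unfolding e1 by simp
      moreover have "DD n f h' = min (card {v\<in>{1..<n}. f v = b'} + (n-1) + 1) (3*(n-1)+2 - card {v\<in>{1..<n}. f v = b'} - (n-1))"
        using DD_neq[of f h' n] 3 b'_def unfolding e2 by simp
      ultimately show ?thesis using arA4[OF sum] by simp
    qed
  qed
qed

lemma upd_adj: assumes "w < n" "c \<noteq> g w" shows "col_adj (star_V n) (g(w := c)) g"
proof -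
  have "{v\<in>star_V n. (g(w := c)) v \<noteq> g v} = {w}" using assms by (auto simp: star_V_def)
  then show ?thesis unfolding col_adj_def by simp
qed

lemma dd_pos_neq: assumes "f 0 \<noteq> g 0" shows "0 < DD n f g"
  using cards_le[of "\<lambda>v. f v = g 0"] cards_le[of "\<lambda>v. g v = f 0"] DD_neq[of f g n, OF assms]
  by linarith

lemma dd0:
  assumes f: "f \<in> colorings 3 (star_V n) star_E" and g: "g \<in> colorings 3 (star_V n) star_E"
    and d: "DD n f g = 0"
  shows "f = g"
proof -
  have c: "f 0 = g 0"
  proof (rule ccontr)
    assume "f 0 \<noteq> g 0" then show False using dd_pos_neq[of f g] d by simp
  qed
  then have "card {v\<in>{1..<n}. f v \<noteq> g v} = 0" using d unfolding DD_def by simp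
  then have e: "{v\<in>{1..<n}. f v \<noteq> g v} = {}" by simp
  show ?thesis
  proof
    fix v show "f v = g v"
    proof (cases "v = 0")
      case True then show ?thesis using c by simp
    next
      case False
      show ?thesis
      proof (cases "v < n")
        case True then show ?thesis using e False by auto
      next
        case False then show ?thesis using f g col_iff by auto
      qed
    qed
  qed
qed

lemma descent:
  assumes f: "f \<in> colorings 3 (star_V n) star_E" and g: "g \<in> colorings 3 (star_V n) star_E"
    and d: "0 < DD n f g"
  shows "\<exists>g'. g' \<in> colorings 3 (star_V n) star_E \<and> col_adj (star_V n) g' g \<and> DD n f g' < DD n f g"
proof -
  have fc: "f 0 < 3" "\<forall>v\<in>{1..<n}. f v < 3 \<and> f v \<noteq> f 0" using f col_iff by auto
  have gc: "g 0 < 3" "\<forall>v\<in>{1..<n}. g v < 3 \<and> g v \<noteq> g 0" "\<forall>v. n \<le> v \<longrightarrow> g v = 0"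
    using g col_iff by auto
  have fin: "finite {v\<in>{1..<n}. P v}" for P by auto
  have n0: "0 < n" using n2 by simp
  show ?thesis
  proof (cases "f 0 = g 0")
    case True
    then have "card {v\<in>{1..<n}. f v \<noteq> g v} > 0" using d unfolding DD_def by simp
    then have "{v\<in>{1..<n}. f v \<noteq> g v} \<noteq> {}" using card_gt_0_iff by blast
    then obtain l where l: "l \<in> {1..<n}" "f l \<noteq> g l" by blast
    define g' where "g' = g(l := f l)"
    have col: "g' \<in> colorings 3 (star_V n) star_E" unfolding col_iff g'_def
      using l fc gc True by auto
    have adj: "col_adj (star_V n) g' g" unfolding g'_def by (rule upd_adj) (use l in auto)
    have "{v\<in>{1..<n}. f v \<noteq> g' v} \<subset> {v\<in>{1..<n}. f v \<noteq> g v}" using l unfolding g'_def by auto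
    then have "card {v\<in>{1..<n}. f v \<noteq> g' v} < card {v\<in>{1..<n}. f v \<noteq> g v}"
      by (rule psubset_card_mono[OF fin])
    moreover have "g' 0 = g 0" using l unfolding g'_def by auto
    ultimately have "DD n f g' < DD n f g" unfolding DD_def using True by simp
    then show ?thesis using col adj by blast
  next
    case False
    define a where "a = f 0"
    define b where "b = g 0"
    define t where "t = 3 - a - b"
    have ab0: "a \<noteq> b" "a < 3" "b < 3" using False fc gc a_def b_def by auto
    have ab: "a \<noteq> b" "a < 3" "b < 3" "t < 3" "t \<noteq> a" "t \<noteq> b"
      using ab0 third3'[OF ab0(2,3,1)] t_def by auto
    define P where "P = card {v\<in>{1..<n}. f v = b}"
    define Q where "Q = card {v\<in>{1..<n}. g v = a}"
    have PQ: "P \<le> n - 1" "Q \<le> n - 1" unfolding P_def Q_def by (rule cards_le)+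
    have DDe: "DD n f g = min (P + Q + 1) (3*(n-1)+2 - P - Q)"
      unfolding DD_def P_def Q_def a_def b_def using False by simp
    have third: "\<And>x. x < 3 \<Longrightarrow> x \<noteq> a \<Longrightarrow> x \<noteq> b \<Longrightarrow> x = t" using ab0 t_def third3 by blast
    show ?thesis
    proof (cases "P + Q + 1 \<le> 3*(n-1)+2 - P - Q")
      case le: True
      show ?thesis
      proof (cases "Q > 0")
        case True
        then have "{v\<in>{1..<n}. g v = a} \<noteq> {}" unfolding Q_def using card_gt_0_iff by blast
        then obtain l where l: "l \<in> {1..<n}" "g l = a" by blast
        define g' where "g' = g(l := t)"
        have col: "g' \<in> colorings 3 (star_V n) star_E" unfolding col_iff g'_def
          using l gc ab b_def by auto
        have adj: "col_adj (star_V n) g' g" unfolding g'_def by (rule upd_adj) (use l ab in auto)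
        have "{v\<in>{1..<n}. g' v = a} \<subset> {v\<in>{1..<n}. g v = a}" using l ab unfolding g'_def by auto
        then have "card {v\<in>{1..<n}. g' v = a} < Q" unfolding Q_def
          by (rule psubset_card_mono[OF fin])
        moreover have "g' 0 = b" using l b_def unfolding g'_def by auto
        moreover have "DD n f g' \<le> P + card {v\<in>{1..<n}. g' v = a} + 1"
          using DD_neq[of f g' n] \<open>g' 0 = b\<close> ab unfolding P_def a_def b_def by simp
        ultimately have "DD n f g' < DD n f g" unfolding DDe using le by linarith
        then show ?thesis using col adj by blast
      next
        case False
        then have e: "{v\<in>{1..<n}. g v = a} = {}" unfolding Q_def by simp
        have gt: "\<forall>v\<in>{1..<n}. g v = t"
        proof
          fix v assume v: "v \<in> {1..<n}"
          then have "g v < 3" "g v \<noteq> b" "g v \<noteq> a" using gc b_def e by auto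
          then show "g v = t" using third by blast
        qed
        define g' where "g' = g(0 := a)"
        have col: "g' \<in> colorings 3 (star_V n) star_E" unfolding col_iff g'_def
          using gt gc ab n0 by auto
        have adj: "col_adj (star_V n) g' g" unfolding g'_def by (rule upd_adj) (use n0 ab b_def in auto)
        have "card {v\<in>{1..<n}. f v \<noteq> g' v} \<le> P" unfolding P_def
        proof (rule card_mono[OF fin], rule subsetI)
          fix x assume x: "x \<in> {v\<in>{1..<n}. f v \<noteq> g' v}"
          then have "x \<in> {1..<n}" "f x \<noteq> t" using gt g'_def by auto
          moreover have "f x < 3" "f x \<noteq> a" using fc a_def \<open>x \<in> {1..<n}\<close> by auto
          ultimately show "x \<in> {v\<in>{1..<n}. f v = b}" using third by blast
        qed
        moreover have "g' 0 = f 0" using a_def g'_def by simp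
        ultimately have "DD n f g' \<le> P" using DD_eq[of f g' n] by simp
        then have "DD n f g' < DD n f g" unfolding DDe using le False by linarith
        then show ?thesis using col adj by blast
      qed
    next
      case gt: False
      show ?thesis
      proof (cases "Q < n - 1")
        case True
        have "\<exists>l\<in>{1..<n}. g l \<noteq> a"
        proof (rule ccontr)
          assume "\<not> (\<exists>l\<in>{1..<n}. g l \<noteq> a)"
          then have "{v\<in>{1..<n}. g v = a} = {1..<n}" by blast
          then have "card {v\<in>{1..<n}. g v = a} = card {1..<n}" by (rule arg_cong)
          then have "Q = n - 1" unfolding Q_def by simp
          then show False using True by simp
        qed
        then obtain l where l: "l \<in> {1..<n}" "g l \<noteq> a" by blast
        moreover have "g l < 3" "g l \<noteq> b" using gc b_def l by auto
        ultimately have glt: "g l = t" using third by blast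
        define g' where "g' = g(l := a)"
        have col: "g' \<in> colorings 3 (star_V n) star_E" unfolding col_iff g'_def
          using l gc ab b_def by auto
        have adj: "col_adj (star_V n) g' g" unfolding g'_def by (rule upd_adj) (use l ab in auto)
        have "{v\<in>{1..<n}. g v = a} \<subset> {v\<in>{1..<n}. g' v = a}"
        proof
          show "{v\<in>{1..<n}. g v = a} \<subseteq> {v\<in>{1..<n}. g' v = a}" using l unfolding g'_def by auto
          show "{v\<in>{1..<n}. g v = a} \<noteq> {v\<in>{1..<n}. g' v = a}"
          proof
            assume "{v\<in>{1..<n}. g v = a} = {v\<in>{1..<n}. g' v = a}"
            moreover have "l \<in> {v\<in>{1..<n}. g' v = a}" using l unfolding g'_def by simp
            ultimately show False using l by blast
          qed
        qed
        then have "Q < card {v\<in>{1..<n}. g' v = a}" unfolding Q_def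
          by (rule psubset_card_mono[OF fin])
        moreover have "card {v\<in>{1..<n}. g' v = a} \<le> n - 1" by (rule cards_le)
        moreover have "g' 0 = b" using l b_def unfolding g'_def by auto
        moreover have "DD n f g' \<le> 3*(n-1)+2 - P - card {v\<in>{1..<n}. g' v = a}"
          using DD_neq[of f g' n] \<open>g' 0 = b\<close> ab unfolding P_def a_def b_def by simp
        ultimately have "DD n f g' < DD n f g" unfolding DDe using gt PQ by (intro arB) auto
        then show ?thesis using col adj by blast
      next
        case False
        then have Qm: "Q = n - 1" using PQ by simp
        have e: "{v\<in>{1..<n}. g v = a} = {1..<n}"
          by (rule card_subset_eq) (use Qm Q_def in auto)
        have ga: "\<forall>v\<in>{1..<n}. g v = a" using e by blast
        define g' where "g' = g(0 := t)"
        have col: "g' \<in> colorings 3 (star_V n) star_E" unfolding col_iff g'_def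
          using ga gc ab n0 by auto
        have adj: "col_adj (star_V n) g' g" unfolding g'_def by (rule upd_adj) (use n0 ab b_def in auto)
        define P' where "P' = card {v\<in>{1..<n}. f v = t}"
        have un: "{1..<n} = {v\<in>{1..<n}. f v = b} \<union> {v\<in>{1..<n}. f v = t}"
        proof
          show "{1..<n} \<subseteq> {v\<in>{1..<n}. f v = b} \<union> {v\<in>{1..<n}. f v = t}"
          proof
            fix x assume x: "x \<in> {1..<n}"
            then have "f x < 3" "f x \<noteq> a" using fc a_def by auto
            then show "x \<in> {v\<in>{1..<n}. f v = b} \<union> {v\<in>{1..<n}. f v = t}" using third x by blast
          qed
        qed auto
        have "card {1..<n} = P + P'" unfolding P_def P'_def
          by (subst un, rule card_Un_disjoint) (use ab in auto)
        then have sum: "P + P' = n - 1" by simp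
        have e2: "{v\<in>{1..<n}. g' v = f 0} = {1..<n}" using ga a_def g'_def by auto
        have "DD n f g' \<le> P' + (n-1) + 1"
          using DD_neq[of f g' n] e2 ab a_def g'_def unfolding P'_def by simp
        then have "DD n f g' < DD n f g" unfolding DDe using gt sum Qm PQ by linarith
        then show ?thesis using col adj by blast
      qed
    qed
  qed
qed


lemma DD_self: "DD n f f = 0"
  using DD_eq[of f f n] by simp

lemma walk_lb:
  assumes w: "col_walk 3 (star_V n) star_E xs"
  shows "DD n (hd xs) (last xs) \<le> length xs - 1"
proof -
  have ne: "xs \<noteq> []" and sub: "set xs \<subseteq> colorings 3 (star_V n) star_E"
    and adj: "\<And>i. Suc i < length xs \<Longrightarrow> col_adj (star_V n) (xs ! i) (xs ! Suc i)"
    using w unfolding col_walk_def by auto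
  have c: "\<And>i. i < length xs \<Longrightarrow> xs ! i \<in> colorings 3 (star_V n) star_E"
    using sub nth_mem by blast
  have "i < length xs \<Longrightarrow> DD n (xs ! 0) (xs ! i) \<le> i" for i
  proof (induction i)
    case 0
    then show ?case using DD_self by simp
  next
    case (Suc i)
    then have "DD n (xs ! 0) (xs ! i) \<le> i" by simp
    moreover have "DD n (xs ! 0) (xs ! Suc i) \<le> DD n (xs ! 0) (xs ! i) + 1"
      using lip[OF c[of 0] c[of i] c[of "Suc i"] adj[of i]] Suc.prems ne by simp
    ultimately show ?case by simp
  qed
  moreover have "hd xs = xs ! 0" using ne by (simp add: hd_conv_nth)
  moreover have "last xs = xs ! (length xs - 1)" using ne by (simp add: last_conv_nth)
  moreover have "length xs - 1 < length xs" using ne by simp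
  ultimately show ?thesis by simp
qed

lemma walk_ex:
  assumes f: "f \<in> colorings 3 (star_V n) star_E"
  shows "g \<in> colorings 3 (star_V n) star_E \<Longrightarrow>
    \<exists>xs. col_walk 3 (star_V n) star_E xs \<and> hd xs = f \<and> last xs = g \<and> length xs - 1 \<le> DD n f g"
proof (induction "DD n f g" arbitrary: g rule: less_induct)
  case less
  show ?case
  proof (cases "DD n f g = 0")
    case True
    then have "f = g" using dd0[OF f less.prems] by simp
    then show ?thesis using f unfolding col_walk_def by (intro exI[of _ "[f]"]) auto
  next
    case False
    then obtain g' where g': "g' \<in> colorings 3 (star_V n) star_E" "col_adj (star_V n) g' g"
       "DD n f g' < DD n f g" using descent[OF f less.prems] by auto
    obtain ys where ys: "col_walk 3 (star_V n) star_E ys" "hd ys = f" "last ys = g'"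
      "length ys - 1 \<le> DD n f g'" using less.hyps[OF g'(3) g'(1)] by blast
    have yne: "ys \<noteq> []" using ys(1) unfolding col_walk_def by simp
    have "col_walk 3 (star_V n) star_E (ys @ [g])"
      unfolding col_walk_def
    proof (intro conjI allI impI)
      show "ys @ [g] \<noteq> []" by simp
      show "set (ys @ [g]) \<subseteq> colorings 3 (star_V n) star_E"
        using ys(1) less.prems unfolding col_walk_def by auto
      fix i assume i: "Suc i < length (ys @ [g])"
      show "col_adj (star_V n) ((ys @ [g]) ! i) ((ys @ [g]) ! Suc i)"
      proof (cases "Suc i < length ys")
        case True
        then show ?thesis using ys(1) unfolding col_walk_def by (simp add: nth_append)
      next
        case False
        then have "i = length ys - 1" "Suc i = length ys" using i by auto
        moreover have "ys ! (length ys - 1) = g'" using ys(3) yne by (simp add: last_conv_nth)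
        ultimately show ?thesis using g'(2) yne by (simp add: nth_append)
      qed
    qed
    moreover have "hd (ys @ [g]) = f" using ys(2) yne by simp
    moreover have "last (ys @ [g]) = g" by simp
    moreover have "length (ys @ [g]) - 1 \<le> DD n f g" using ys(4) g'(3) yne by simp
    ultimately show ?thesis by blast
  qed
qed

lemma dist_eq:
  assumes f: "f \<in> colorings 3 (star_V n) star_E" and g: "g \<in> colorings 3 (star_V n) star_E"
  shows "col_dist 3 (star_V n) star_E f g = enat (DD n f g)"
proof (rule antisym)
  obtain xs where xs: "col_walk 3 (star_V n) star_E xs" "hd xs = f" "last xs = g"
    "length xs - 1 \<le> DD n f g" using walk_ex[OF f g] by blast
  show "col_dist 3 (star_V n) star_E f g \<le> enat (DD n f g)"
    unfolding col_dist_def by (rule INF_lower2[of xs]) (use xs in auto)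
  show "enat (DD n f g) \<le> col_dist 3 (star_V n) star_E f g"
    unfolding col_dist_def
  proof (rule INF_greatest)
    fix ys assume "ys \<in> {xs. col_walk 3 (star_V n) star_E xs \<and> hd xs = f \<and> last xs = g}"
    then show "enat (DD n f g) \<le> enat (length ys - 1)" using walk_lb by auto
  qed
qed

lemma half: "2 * (x::nat) \<le> y \<Longrightarrow> x \<le> y div 2"
  by presburger

lemma DD_le:
  assumes f: "f \<in> colorings 3 (star_V n) star_E" and g: "g \<in> colorings 3 (star_V n) star_E"
  shows "DD n f g \<le> (3 * n) div 2"
proof (cases "f 0 = g 0")
  case True
  then have "DD n f g \<le> n - 1" using DD_eq[of f g n] cards_le by simp
  moreover have "2 * (n - 1) \<le> 3 * n" by simp
  ultimately show ?thesis using half[of "n-1" "3*n"] by linarith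
next
  case False
  define P where "P = card {v\<in>{1..<n}. f v = g 0}"
  define Q where "Q = card {v\<in>{1..<n}. g v = f 0}"
  have PQ: "P \<le> n - 1" "Q \<le> n - 1" unfolding P_def Q_def by (rule cards_le)+
  have d: "DD n f g = min (P + Q + 1) (3*(n-1)+2 - P - Q)"
    using DD_neq[of f g n] False unfolding P_def Q_def by simp
  have m1: "min (P + Q + 1) (3*(n-1)+2 - P - Q) \<le> P + Q + 1" by (rule min.cobounded1)
  have m2: "min (P + Q + 1) (3*(n-1)+2 - P - Q) \<le> 3*(n-1)+2 - P - Q" by (rule min.cobounded2)
  have "2 * min (P + Q + 1) (3*(n-1)+2 - P - Q) \<le> 3 * ((n-1)+1)" using arC[OF PQ] .
  then have "2 * min (P + Q + 1) (3*(n-1)+2 - P - Q) \<le> 3 * n" using n2 by simp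
  then show ?thesis unfolding d by (rule half)
qed

end

theorem mainTheorem17:
  fixes n :: nat
  assumes "n \<ge> 2"
  shows "col_diam 3 (star_V n) star_E = enat ((3 * n) div 2)"
proof (rule antisym)
  have C: "\<And>h. h \<in> colorings 3 (star_V n) star_E \<longleftrightarrow>
    h 0 < 3 \<and> (\<forall>v\<in>{1..<n}. h v < 3 \<and> h v \<noteq> h 0) \<and> (\<forall>v. n \<le> v \<longrightarrow> h v = 0)"
    using col_iff[OF assms] by blast
  show "col_diam 3 (star_V n) star_E \<le> enat ((3 * n) div 2)"
    unfolding col_diam_def
    by (intro SUP_least) (simp add: dist_eq[OF assms] DD_le[OF assms])
  define f0 :: "nat \<Rightarrow> nat" where "f0 = (\<lambda>v. if v = 0 then 0 else if v < n then 1 else 0)"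
  define g0 :: "nat \<Rightarrow> nat" where
    "g0 = (\<lambda>v. if v = 0 then 1 else if v < n then (if v \<le> n div 2 then 0 else 2) else 0)"
  have f0c: "f0 \<in> colorings 3 (star_V n) star_E" unfolding C f0_def using assms by auto
  have g0c: "g0 \<in> colorings 3 (star_V n) star_E" unfolding C g0_def using assms by auto
  have e1: "{v\<in>{1..<n}. f0 v = g0 0} = {1..<n}" unfolding f0_def g0_def by auto
  have e2: "{v\<in>{1..<n}. g0 v = f0 0} = {1..n div 2}" unfolding f0_def g0_def using assms by auto
  have "DD n f0 g0 = min (card {1..<n} + card {1..n div 2} + 1) (3*(n-1)+2 - card {1..<n} - card {1..n div 2})"
    using DD_neq[of f0 g0 n] unfolding e1 e2 by (simp add: f0_def g0_def)
  also have "\<dots> = min (n - 1 + n div 2 + 1) (3*(n-1)+2 - (n - 1) - n div 2)" by simp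
  also have "\<dots> = (3 * n) div 2"
  proof -
    have q1: "2 * (n div 2) \<le> n" by presburger
    have q2: "(3 * n) div 2 = n + n div 2" by presburger
    have A: "n - 1 + n div 2 + 1 = n + n div 2" using assms by simp
    have B: "3*(n-1)+2 - (n - 1) - n div 2 = 2*n - n div 2" using assms by simp
    have "n + n div 2 \<le> 2*n - n div 2" using q1 by simp
    then show ?thesis unfolding A B q2 by (rule min_absorb1)
  qed
  finally have dd: "DD n f0 g0 = (3 * n) div 2" .
  have "enat ((3 * n) div 2) \<le> (SUP g\<in>colorings 3 (star_V n) star_E. col_dist 3 (star_V n) star_E f0 g)"
    by (rule SUP_upper2[OF g0c]) (simp add: dist_eq[OF assms f0c g0c] dd)
  then show "enat ((3 * n) div 2) \<le> col_diam 3 (star_V n) star_E"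
    unfolding col_diam_def by (rule SUP_upper2[OF f0c])
qed

end
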